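(* Assume Condition U1. For every $\sigma=(b,v)\in\mathbb{R}\times(-1,1)$, the symplectic form $\Omega$ is nondegenerate on the tangent space $\mathcal{T}_{S(\sigma)}\mathcal{S}=\mathrm{span}\{\tau_1(v),\tau_2(v)\}$, i.e. $\mathcal{T}_{S(\sigma)}\mathcal{S}$ is a symplectic subspace.
   Context: Fix $a>0$. Condition U1: $U:\mathbb{R}\to\mathbb{R}$ smooth, $U(\pm a)=U'(\pm a)=0$, $U''(\pm a)>0$, $U>0$ on $(-a,a)$, $\inf U>-\infty$, and for some $m>0$, $U(\psi)=\frac{m^2}{2}(\psi\mp a)^2+\mathcal{O}(|\psi\mp a|^{14})$ as $\psi\to\pm a$. $s$ is a kink: $s''=U'(s)$, $s(\pm\infty)=\pm a$. For $|v|<1$: $\gamma=(1-v^2)^{-1/2}$, $\psi_v(y)=s(\gamma y)$, $\pi_v=-v\psi_v'$. For $\sigma=(b,v)$, $S(\sigma)=(\psi_v(x-b),\pi_v(x-b))$ and $\mathcal{S}=\{S(\sigma):b\in\mathbb{R},|v|<1\}$. Tangent vectors (as functions of $y=x-b$): $\tau_1(v)=\partial_bS(\sigma)=(-\psi_v'(y),-\pi_v'(y))$, $\tau_2(v)=\partial_vS(\sigma)=(\partial_v\psi_v(y),\partial_v\pi_v(y))$. Symplectic form on $E=H^1(\mathbb{R})\oplus L^2(\mathbb{R})$: $\Omega(Y_1,Y_2)=\langle Y_1,JY_2\rangle=\langle\psi_1,\pi_2\rangle-\langle\pi_1,\psi_2\rangle$, $J=\begin{pmatrix}0&1\\-1&0\end{pmatrix}$,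 $\langle f,g\rangle=\int fg$. *)

theory Defs
  imports "HOL-Analysis.Analysis" "HOL-Library.Landau_Symbols"
begin

definition smooth_fun :: "(real \<Rightarrow> real) \<Rightarrow> bool" where
  "smooth_fun f \<longleftrightarrow> (\<forall>n x. ((deriv ^^ n) f) differentiable (at x))"

definition cond_U1 :: "real \<Rightarrow> (real \<Rightarrow> real) \<Rightarrow> bool" where
  "cond_U1 a U \<longleftrightarrow> smooth_fun U
     \<and> U a = 0 \<and> U (-a) = 0 \<and> deriv U a = 0 \<and> deriv U (-a) = 0
     \<and> deriv (deriv U) a > 0 \<and> deriv (deriv U) (-a) > 0
     \<and> (\<forall>\<psi>. -a < \<psi> \<and> \<psi> < a \<longrightarrow> U \<psi> > 0)
     \<and> bdd_below (range U)
     \<and> (\<exists>m>0. (\<lambda>\<psi>. U \<psi> - m\<^sup>2 / 2 * (\<psi> - a)\<^sup>2) \<in> O[at a](\<lambda>\<psi>. \<bar>\<psi> - a\<bar> ^ 14)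
            \<and> (\<lambda>\<psi>. U \<psi> - m\<^sup>2 / 2 * (\<psi> + a)\<^sup>2) \<in> O[at (-a)](\<lambda>\<psi>. \<bar>\<psi> + a\<bar> ^ 14))"

definition is_kink :: "real \<Rightarrow> (real \<Rightarrow> real) \<Rightarrow> (real \<Rightarrow> real) \<Rightarrow> bool" where
  "is_kink a U s \<longleftrightarrow> (\<forall>x. s differentiable (at x)) \<and> (\<forall>x. (deriv s) differentiable (at x))
     \<and> (\<forall>x. deriv (deriv s) x = deriv U (s x))
     \<and> (s \<longlongrightarrow> a) at_top \<and> (s \<longlongrightarrow> -a) at_bot"

definition lgamma :: "real \<Rightarrow> real" where
  "lgamma v = 1 / sqrt (1 - v\<^sup>2)"

definition psi_v :: "(real \<Rightarrow> real) \<Rightarrow> real \<Rightarrow> real \<Rightarrow> real" where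
  "psi_v s v y = s (lgamma v * y)"

definition pi_v :: "(real \<Rightarrow> real) \<Rightarrow> real \<Rightarrow> real \<Rightarrow> real" where
  "pi_v s v y = - v * deriv (psi_v s v) y"

type_synonym state = "(real \<Rightarrow> real) \<times> (real \<Rightarrow> real)"

text \<open>Tangent vectors at S(b,v), as functions of x (with y = x - b).\<close>
definition tau1 :: "(real \<Rightarrow> real) \<Rightarrow> real \<Rightarrow> real \<Rightarrow> state" where
  "tau1 s b v = ((\<lambda>x. - deriv (psi_v s v) (x - b)), (\<lambda>x. - deriv (pi_v s v) (x - b)))"

definition tau2 :: "(real \<Rightarrow> real) \<Rightarrow> real \<Rightarrow> real \<Rightarrow> state" where
  "tau2 s b v = ((\<lambda>x. deriv (\<lambda>w. psi_v s w (x - b)) v), (\<lambda>x. deriv (\<lambda>w. pi_v s w (x - b)) v))"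

definition Omega :: "state \<Rightarrow> state \<Rightarrow> real" where
  "Omega Y1 Y2 = (\<integral>x. fst Y1 x * snd Y2 x \<partial>lborel) - (\<integral>x. snd Y1 x * fst Y2 x \<partial>lborel)"

definition lin_comb :: "real \<Rightarrow> state \<Rightarrow> real \<Rightarrow> state \<Rightarrow> state" where
  "lin_comb c1 Y1 c2 Y2 = ((\<lambda>x. c1 * fst Y1 x + c2 * fst Y2 x), (\<lambda>x. c1 * snd Y1 x + c2 * snd Y2 x))"

definition span2 :: "state \<Rightarrow> state \<Rightarrow> state set" where
  "span2 Y1 Y2 = {lin_comb c1 Y1 c2 Y2 | c1 c2. True}"

definition symplectic_subspace :: "state set \<Rightarrow> bool" where
  "symplectic_subspace V \<longleftrightarrow> (\<forall>Y\<in>V. (\<forall>Z\<in>V. Omega Y Z = 0) \<longrightarrow> Y = ((\<lambda>_. 0), (\<lambda>_. 0)))"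

end

theory Submission
  imports Defs "HOL-Probability.Sinc_Integral"
begin

lemma mono_helper:
  fixes h h' :: "real \<Rightarrow> real"
  assumes d: "\<And>x. a \<le> x \<Longrightarrow> x \<le> b \<Longrightarrow> (h has_real_derivative h' x) (at x)"
    and nn: "\<And>x. a \<le> x \<Longrightarrow> x \<le> b \<Longrightarrow> h' x \<ge> 0" and ab: "a \<le> b"
  shows "h a \<le> h b"
proof (rule DERIV_nonneg_imp_increasing_open[OF ab])
  show "\<And>x. a < x \<Longrightarrow> x < b \<Longrightarrow> \<exists>y. (h has_real_derivative y) (at x) \<and> 0 \<le> y"
    using d nn by force
  show "continuous_on {a..b} h"
    using d by (intro continuous_at_imp_continuous_on ballI) (metis DERIV_isCont atLeastAtMost_iff)
qed

lemma mvt_theta: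
  fixes f f' :: "real \<Rightarrow> real"
  assumes d: "\<And>t. (f has_real_derivative f' t) (at t)"
  shows "\<exists>\<theta>. 0 \<le> \<theta> \<and> \<theta> \<le> 1 \<and> f x - f y = (x - y) * f' (y + \<theta> * (x - y))"
proof (cases x y rule: linorder_cases)
  case less
  from MVT2[OF less, of f f'] d obtain z where z: "x < z" "z < y" "f y - f x = (y - x) * f' z" by blast
  show ?thesis
  proof (rule exI[of _ "(z - y) / (x - y)"])
    have e: "y + (z - y) / (x - y) * (x - y) = z" using less by simp
    show "0 \<le> (z - y) / (x - y) \<and> (z - y) / (x - y) \<le> 1 \<and> f x - f y = (x - y) * f' (y + (z - y) / (x - y) * (x - y))"
      unfolding e using less z by (auto simp: field_simps)
  qed
next
  case equal then show ?thesis by (intro exI[of _ 0]) auto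
next
  case greater
  from MVT2[OF greater, of f f'] d obtain z where z: "y < z" "z < x" "f x - f y = (x - y) * f' z" by blast
  show ?thesis
  proof (rule exI[of _ "(z - y) / (x - y)"])
    have e: "y + (z - y) / (x - y) * (x - y) = z" using greater by simp
    show "0 \<le> (z - y) / (x - y) \<and> (z - y) / (x - y) \<le> 1 \<and> f x - f y = (x - y) * f' (y + (z - y) / (x - y) * (x - y))"
      unfolding e using greater z by (auto simp: field_simps)
  qed
qed

lemma smooth_derivs:
  assumes "smooth_fun U"
  shows "\<And>x. (U has_real_derivative deriv U x) (at x)"
    "\<And>x. (deriv U has_real_derivative deriv (deriv U) x) (at x)"
    "\<And>x. isCont (deriv (deriv U)) x"
proof -
  fix x
  have "((deriv ^^ 0) U) differentiable (at x)" using assms unfolding smooth_fun_def by blast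
  then show "(U has_real_derivative deriv U x) (at x)" by (simp add: DERIV_deriv_iff_real_differentiable)
  have "((deriv ^^ 1) U) differentiable (at x)" using assms unfolding smooth_fun_def by blast
  then show "(deriv U has_real_derivative deriv (deriv U) x) (at x)" by (simp add: DERIV_deriv_iff_real_differentiable)
  have "((deriv ^^ 2) U) differentiable (at x)" using assms unfolding smooth_fun_def by blast
  then show "isCont (deriv (deriv U)) x" by (simp add: numeral_2_eq_2 differentiable_imp_continuous_within)
qed

lemma U_local:
  assumes sm: "smooth_fun U" and U0: "U c = 0" and U1: "deriv U c = 0" and U2: "deriv (deriv U) c > 0"
  shows "\<exists>\<delta>>0. \<exists>k>0. \<exists>M L. \<forall>\<psi>. \<bar>\<psi> - c\<bar> < \<delta> \<longrightarrow>
     k * (\<psi> - c)\<^sup>2 \<le> U \<psi> \<and> U \<psi> \<le> M * (\<psi> - c)\<^sup>2 \<and> \<bar>deriv U \<psi>\<bar> \<le> L * \<bar>\<psi> - c\<bar>"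
proof -
  note d = smooth_derivs[OF sm]
  define l where "l = deriv (deriv U) c"
  have lp: "l > 0" using U2 by (simp add: l_def)
  from d(3)[of c, unfolded isCont_def, THEN tendstoD, of "l/2"] lp
  have "\<forall>\<^sub>F x in at c. dist (deriv (deriv U) x) l < l/2" by (simp add: l_def)
  then obtain \<delta> where \<delta>: "\<delta> > 0" and hd: "\<And>x. x \<noteq> c \<Longrightarrow> dist x c < \<delta> \<Longrightarrow> dist (deriv (deriv U) x) l < l/2"
    unfolding eventually_at by blast
  have B: "l/2 \<le> deriv (deriv U) x \<and> deriv (deriv U) x \<le> 2*l" if "\<bar>x - c\<bar> < \<delta>" for x
  proof (cases "x = c")
    case True then show ?thesis using lp by (simp add: l_def)
  next
    case False
    have "\<bar>deriv (deriv U) x - l\<bar> < l/2" using hd[of x] that False by (simp add: dist_real_def)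
    then show ?thesis by arith
  qed
  have D1: "l/2 * (\<psi> - c)\<^sup>2 \<le> (\<psi> - c) * deriv U \<psi> \<and> \<bar>deriv U \<psi>\<bar> \<le> 2*l * \<bar>\<psi> - c\<bar>"
    if "\<bar>\<psi> - c\<bar> < \<delta>" for \<psi>
  proof -
    obtain \<theta> where th: "0 \<le> \<theta>" "\<theta> \<le> 1" "deriv U \<psi> - deriv U c = (\<psi> - c) * deriv (deriv U) (c + \<theta> * (\<psi> - c))"
      using mvt_theta[OF d(2)] by blast
    have "\<bar>c + \<theta> * (\<psi> - c) - c\<bar> < \<delta>" using th that
      by (simp add: abs_mult) (metis abs_ge_zero le_less_trans mult_left_le_one_le)
    from B[OF this] obtain q where q: "l/2 \<le> q" "q \<le> 2*l" "deriv U \<psi> = (\<psi> - c) * q"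
      using th U1 by auto
    have "(\<psi> - c)\<^sup>2 * (l/2) \<le> (\<psi> - c)\<^sup>2 * q" using q by (intro mult_left_mono) auto
    moreover have "\<bar>\<psi> - c\<bar> * q \<le> \<bar>\<psi> - c\<bar> * (2*l)" using q by (intro mult_left_mono) auto
    moreover have "(\<psi> - c) * deriv U \<psi> = (\<psi> - c)\<^sup>2 * q" by (simp add: q(3) power2_eq_square)
    moreover have "\<bar>deriv U \<psi>\<bar> = \<bar>\<psi> - c\<bar> * q" using q lp by (simp add: abs_mult)
    ultimately show ?thesis by (simp add: mult.commute)
  qed
  have "l/4 * (\<psi> - c)\<^sup>2 \<le> U \<psi> \<and> U \<psi> \<le> 2*l * (\<psi> - c)\<^sup>2" if "\<bar>\<psi> - c\<bar> < \<delta>" for \<psi>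
  proof -
    define G where "G t = U t - l/4 * (t - c)\<^sup>2" for t
    have dG: "(G has_real_derivative (deriv U t - l/2 * (t - c))) (at t)" for t
      unfolding G_def by (rule derivative_eq_intros d(1) refl)+ simp
    obtain \<theta> where th: "0 \<le> \<theta>" "\<theta> \<le> 1" "G \<psi> - G c = (\<psi> - c) * (deriv U (c + \<theta> * (\<psi> - c)) - l/2 * (c + \<theta> * (\<psi> - c) - c))"
      using mvt_theta[OF dG] by blast
    have in1: "\<bar>c + \<theta> * (\<psi> - c) - c\<bar> < \<delta>" using th that
      by (simp add: abs_mult) (metis abs_ge_zero le_less_trans mult_left_le_one_le)
    have G0: "G \<psi> \<ge> 0"
    proof (cases "\<theta> = 0")
      case True then show ?thesis using th U0 U1 by (simp add: G_def)
    next
      case False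
      let ?e = "c + \<theta> * (\<psi> - c)"
      from D1[OF in1] have "l/2 * (\<theta> * (\<psi> - c))\<^sup>2 \<le> (\<theta> * (\<psi> - c)) * deriv U ?e" by simp
      moreover have "\<theta> * ((\<psi> - c) * (deriv U ?e - l/2 * (?e - c))) = (\<theta> * (\<psi> - c)) * deriv U ?e - l/2 * (\<theta> * (\<psi> - c))\<^sup>2"
        by (simp add: power2_eq_square) algebra
      ultimately have "\<theta> * ((\<psi> - c) * (deriv U ?e - l/2 * (?e - c))) \<ge> 0"
        by linarith
      hence "(\<psi> - c) * (deriv U ?e - l/2 * (?e - c)) \<ge> 0" using th False
        by (simp add: zero_le_mult_iff)
      then show ?thesis using th U0 by (simp add: G_def)
    qed
    obtain \<eta> where et: "0 \<le> \<eta>" "\<eta> \<le> 1" "U \<psi> - U c = (\<psi> - c) * deriv U (c + \<eta> * (\<psi> - c))"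
      using mvt_theta[OF d(1)] by blast
    have in2: "\<bar>c + \<eta> * (\<psi> - c) - c\<bar> < \<delta>" using et that
      by (simp add: abs_mult) (metis abs_ge_zero le_less_trans mult_left_le_one_le)
    have a1: "\<bar>c + \<eta> * (\<psi> - c) - c\<bar> \<le> \<bar>\<psi> - c\<bar>" using et
      by (simp add: abs_mult mult_left_le_one_le)
    have b1: "\<bar>deriv U (c + \<eta> * (\<psi> - c))\<bar> \<le> 2*l*\<bar>\<psi> - c\<bar>"
    proof -
      have "\<bar>deriv U (c + \<eta> * (\<psi> - c))\<bar> \<le> 2*l*\<bar>c + \<eta> * (\<psi> - c) - c\<bar>" using D1[OF in2] by blast
      also have "\<dots> \<le> 2*l*\<bar>\<psi> - c\<bar>" using a1 lp by (intro mult_left_mono) auto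
      finally show ?thesis .
    qed
    have b2: "U \<psi> \<le> \<bar>\<psi> - c\<bar> * \<bar>deriv U (c + \<eta> * (\<psi> - c))\<bar>" using et U0
      by (simp add: abs_mult[symmetric])
    have ub: "U \<psi> \<le> \<bar>\<psi> - c\<bar> * (2*l*\<bar>\<psi> - c\<bar>)"
      using b1 b2 by (meson abs_ge_zero mult_left_mono order_trans)
    have e: "\<bar>\<psi> - c\<bar> * (2*l*\<bar>\<psi> - c\<bar>) = 2*l*(\<psi> - c)\<^sup>2"
      by (simp add: power2_eq_square abs_mult_self_eq mult.commute mult.left_commute)
    show ?thesis using G0 ub[unfolded e] by (simp add: G_def)
  qed
  with D1 lp \<delta> show ?thesis
    by (intro exI[of _ \<delta>] conjI exI[of _ "l/4"] exI[of _ "2*l"]) auto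
qed

lemma abs_2mult_le: fixes a b :: real shows "\<bar>2 * (a * b)\<bar> \<le> a * a + b * b"
proof -
  have "0 \<le> (\<bar>a\<bar> - \<bar>b\<bar>) * (\<bar>a\<bar> - \<bar>b\<bar>)" by simp
  also have "\<dots> = a * a + b * b - \<bar>2 * (a * b)\<bar>"
    by (simp add: algebra_simps abs_mult)
  finally show ?thesis by simp
qed

lemma decay_top:
  fixes s f U :: "real \<Rightarrow> real" and c c' :: real
  assumes sm: "smooth_fun U" and U0: "U c = 0" and U1: "deriv U c = 0" and U2: "deriv (deriv U) c > 0"
    and ds: "\<And>x. (s has_real_derivative f x) (at x)"
    and df: "\<And>x. (f has_real_derivative deriv U (s x)) (at x)"
    and lt: "(s \<longlongrightarrow> c) at_top" and lb: "(s \<longlongrightarrow> c') at_bot" and ne: "c' \<noteq> c"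
  shows "\<exists>X B \<kappa>. \<kappa> > 0 \<and> (\<forall>x\<ge>X. (f x)\<^sup>2 \<le> B * exp (-\<kappa>*x) \<and> (deriv U (s x))\<^sup>2 \<le> B * exp (-\<kappa>*x))"
proof -
  note d = smooth_derivs[OF sm]
  obtain \<delta> k M L where \<delta>: "\<delta> > 0" and k: "k > 0" and
    loc: "\<And>\<psi>. \<bar>\<psi> - c\<bar> < \<delta> \<Longrightarrow> k * (\<psi> - c)\<^sup>2 \<le> U \<psi> \<and> U \<psi> \<le> M * (\<psi> - c)\<^sup>2 \<and> \<bar>deriv U \<psi>\<bar> \<le> L * \<bar>\<psi> - c\<bar>"
    using U_local[OF sm U0 U1 U2] by blast
  have cs: "isCont s x" for x using ds DERIV_isCont by blast
  have cf: "isCont f x" for x using df DERIV_isCont by blast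
  have dUs: "((\<lambda>x. U (s x)) has_real_derivative deriv U (s x) * f x) (at x)" for x
    by (rule DERIV_chain2[OF d(1) ds])
  have dE: "((\<lambda>x. f x * f x - 2 * U (s x)) has_real_derivative 0) (at x)" for x
  proof -
    have "((\<lambda>x. f x * f x - 2 * U (s x)) has_real_derivative
        (deriv U (s x) * f x + deriv U (s x) * f x) - 2 * (deriv U (s x) * f x)) (at x)"
      by (intro DERIV_diff DERIV_mult df DERIV_cmult dUs)
    then show ?thesis by simp
  qed
  define C where "C = f 0 * f 0 - 2 * U (s 0)"
  have Ec: "f x * f x - 2 * U (s x) = C" for x
    unfolding C_def by (rule DERIV_isconst_all) (use dE in blast)
  have Ulim: "((\<lambda>x. U (s x)) \<longlongrightarrow> 0) at_top"
    using isCont_tendsto_compose[OF DERIV_isCont[OF d(1)] lt] U0 by simp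
  have flim: "((\<lambda>x. f x * f x) \<longlongrightarrow> C) at_top"
  proof -
    have "((\<lambda>x. C + 2 * U (s x)) \<longlongrightarrow> C + 2 * 0) at_top"
      by (intro tendsto_intros Ulim)
    moreover have "(\<lambda>x. C + 2 * U (s x)) = (\<lambda>x. f x * f x)" using Ec by (auto simp: fun_eq_iff algebra_simps)
    ultimately show ?thesis by simp
  qed
  have C0: "C \<ge> 0"
    by (rule tendsto_lowerbound[OF flim]) auto
  have "C \<le> 0"
  proof (rule ccontr)
    assume "\<not> C \<le> 0" hence Cp: "C > 0" by simp
    have ev1: "\<forall>\<^sub>F x in at_top. f x * f x > C/2"
      using order_tendstoD(1)[OF flim, of "C/2"] Cp by simp
    have ev2: "\<forall>\<^sub>F x in at_top. dist (s x) c < 1"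
      using tendstoD[OF lt, of 1] by simp
    obtain X where X: "\<And>x. x \<ge> X \<Longrightarrow> f x * f x > C/2 \<and> dist (s x) c < 1"
      using eventually_conj[OF ev1 ev2] unfolding eventually_at_top_linorder by blast
    define T where "T = 2 + 8 / C"
    have T: "T > 0" "T * T * (C/2) \<ge> 8"
    proof -
      have p8: "8/C > 0" using Cp by simp
      then show "T > 0" unfolding T_def by linarith
      have "T * T \<ge> 2 * (8 / C)" unfolding T_def using Cp p8
        by (intro mult_mono) auto
      then have "T * T * (C/2) \<ge> 2 * (8/C) * (C/2)" using Cp by (intro mult_right_mono) auto
      then show "T * T * (C/2) \<ge> 8" using Cp by simp
    qed
    obtain z where z: "X < z" "z < X + T" "s (X + T) - s X = (X + T - X) * f z"
      using MVT2[of X "X + T" s f] ds T by auto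
    have "(s (X + T) - s X) * (s (X + T) - s X) = T * T * (f z * f z)" using z by simp
    also have "\<dots> > T * T * (C/2)" using X[of z] z T by (intro mult_strict_left_mono) auto
    finally have big: "(s (X + T) - s X) * (s (X + T) - s X) > 8" using T by simp
    have "\<bar>s (X + T) - s X\<bar> < 2" using X[of X] X[of "X+T"] T by (auto simp: dist_real_def)
    hence "\<bar>s (X + T) - s X\<bar> * \<bar>s (X + T) - s X\<bar> < 2 * 2"
      by (intro mult_strict_mono') auto
    with big show False by (simp add: abs_mult[symmetric])
  qed
  with C0 have Cz: "C = 0" by simp
  have hE: "f x * f x = 2 * U (s x)" for x using Ec[of x] Cz by simp
  define Z where "Z = {x. s x = c}"
  have "closed Z" unfolding Z_def
    by (intro closed_Collect_eq continuous_at_imp_continuous_on ballI cs continuous_intros)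
  moreover have "open Z"
    unfolding open_dist
  proof (intro ballI)
    fix x0 assume "x0 \<in> Z" hence sx0: "s x0 = c" by (simp add: Z_def)
    obtain e where e: "e > 0" and he: "\<And>y. dist y x0 < e \<Longrightarrow> dist (s y) (s x0) < \<delta>"
      using cs[of x0] \<delta> unfolding continuous_at_eps_delta by blast
    define K where "K = 1 + 2 * \<bar>M\<bar>"
    define W where "W t = (s t - c) * (s t - c)" for t
    have dW: "(W has_real_derivative 2 * ((s t - c) * f t)) (at t)" for t
      unfolding W_def by (rule derivative_eq_intros ds refl | simp add: algebra_simps)+
    have Wb: "\<bar>2 * ((s t - c) * f t)\<bar> \<le> K * W t" if "dist t x0 < e" for t
    proof -
      have in\<delta>: "\<bar>s t - c\<bar> < \<delta>" using he[OF that] sx0 by (simp add: dist_real_def)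
      have u: "U (s t) \<le> M * (s t - c)\<^sup>2" using loc[OF in\<delta>] by blast
      have "M * (s t - c)\<^sup>2 \<le> \<bar>M\<bar> * (s t - c)\<^sup>2" by (intro mult_right_mono) auto
      then have "f t * f t \<le> 2 * \<bar>M\<bar> * W t"
        using u unfolding W_def hE power2_eq_square by linarith
      moreover have "\<bar>2 * ((s t - c) * f t)\<bar> \<le> W t + f t * f t"
        unfolding W_def by (rule abs_2mult_le)
      ultimately show ?thesis unfolding K_def by (simp add: algebra_simps)
    qed
    have W0: "W t \<ge> 0" for t unfolding W_def by simp
    have "y \<in> Z" if y: "dist y x0 < e" for y
    proof (cases "y \<ge> x0")
      case True
      define h where "h t = - (W t * exp (- K * t))" for t
      have "h x0 \<le> h y"
      proof (rule mono_helper[OF _ _ True])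
        fix t assume t: "x0 \<le> t" "t \<le> y"
        show "(h has_real_derivative - (2 * ((s t - c) * f t) * exp (- K * t) - K * W t * exp (- K * t))) (at t)"
          unfolding h_def by (rule derivative_eq_intros dW refl | simp)+
        have "dist t x0 < e" using t y by (simp add: dist_real_def)
        from Wb[OF this] have "2 * ((s t - c) * f t) - K * W t \<le> 0" by linarith
        then have mn: "(2 * ((s t - c) * f t) - K * W t) * exp (- K * t) \<le> 0"
          by (intro mult_nonpos_nonneg) auto
        have eq: "2 * ((s t - c) * f t) * exp (- K * t) - K * W t * exp (- K * t) = (2 * ((s t - c) * f t) - K * W t) * exp (- K * t)"
          by (simp only: left_diff_distrib)
        show "0 \<le> - (2 * ((s t - c) * f t) * exp (- K * t) - K * W t * exp (- K * t))"
          using mn eq by linarith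
      qed
      hence "W y * exp (- K * y) \<le> 0" using sx0 by (simp add: h_def W_def)
      hence "W y \<le> 0" by (simp add: mult_le_0_iff)
      with W0[of y] have "W y = 0" by linarith
      then show ?thesis by (simp add: Z_def W_def)
    next
      case False
      define h where "h t = W t * exp (K * t)" for t
      have "h y \<le> h x0"
      proof (rule mono_helper[where h=h and a=y and b=x0])
        fix t assume t: "y \<le> t" "t \<le> x0"
        show "(h has_real_derivative (2 * ((s t - c) * f t) * exp (K * t) + K * W t * exp (K * t))) (at t)"
          unfolding h_def by (rule derivative_eq_intros dW refl | simp)+
        have "dist t x0 < e" using t y False by (simp add: dist_real_def)
        from Wb[OF this] have "2 * ((s t - c) * f t) + K * W t \<ge> 0" by linarith
        then show "0 \<le> 2 * ((s t - c) * f t) * exp (K * t) + K * W t * exp (K * t)"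
          by (simp flip: distrib_right)
      qed (use False in auto)
      hence "W y * exp (K * y) \<le> 0" using sx0 by (simp add: h_def W_def)
      hence "W y \<le> 0" by (simp add: mult_le_0_iff)
      with W0[of y] have "W y = 0" by linarith
      then show ?thesis by (simp add: Z_def W_def)
    qed
    with e show "\<exists>e>0. \<forall>y. dist y x0 < e \<longrightarrow> y \<in> Z" by blast
  qed
  ultimately have "Z = {} \<or> Z = UNIV" using clopen by blast
  moreover have "Z \<noteq> UNIV"
  proof
    assume "Z = UNIV" hence "s = (\<lambda>_. c)" by (auto simp: Z_def fun_eq_iff)
    with lb have "((\<lambda>_::real. c) \<longlongrightarrow> c') at_bot" by simp
    hence "c = c'" using tendsto_unique[OF trivial_limit_at_bot_linorder tendsto_const] by blast
    with ne show False by simp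
  qed
  ultimately have nz: "s x \<noteq> c" for x by (auto simp: Z_def)
  obtain X0 where X0: "\<And>x. x \<ge> X0 \<Longrightarrow> \<bar>s x - c\<bar> < \<delta>"
    using tendstoD[OF lt \<delta>] unfolding eventually_at_top_linorder dist_real_def by blast
  define W where "W t = (s t - c) * (s t - c)" for t
  have dW: "(W has_real_derivative 2 * ((s t - c) * f t)) (at t)" for t
    unfolding W_def by (rule derivative_eq_intros ds refl | simp add: algebra_simps)+
  have Wp: "W t > 0" for t unfolding W_def using nz[of t] by (metis not_real_square_gt_zero right_minus_eq)
  have fl: "f x * f x \<ge> 2 * k * W x" if "x \<ge> X0" for x
    using loc[OF X0[OF that]] hE[of x] by (simp add: W_def power2_eq_square)
  define h where "h t = (s t - c) * f t" for t
  have ch: "continuous_on A h" for A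
    unfolding h_def by (intro continuous_at_imp_continuous_on ballI continuous_intros cs cf)
  have hnz: "h x \<noteq> 0" if "x \<ge> X0" for x
  proof -
    have "f x * f x > 0" proof -
      have "2 * k * W x > 0" using Wp[of x] k by simp
      then show ?thesis using fl[OF that] by linarith
    qed
    then show ?thesis using nz[of x] by (auto simp: h_def)
  qed
  have hneg: "h x < 0" if x: "x \<ge> X0" for x
  proof (rule ccontr)
    assume "\<not> h x < 0" hence hx: "h x > 0" using hnz[OF x] by linarith
    have pos: "h t > 0" if tx: "t \<ge> x" for t
    proof (rule ccontr)
      assume "\<not> h t > 0" hence ht: "h t \<le> 0" by simp
      obtain z where "x \<le> z" "z \<le> t" "h z = 0"
        using IVT2'[of h t 0 x, OF ht _ tx ch] hx by auto
      with hnz[of z] x show False by simp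
    qed
    have Wi: "W x \<le> W t" if "t \<ge> x" for t
      by (rule mono_helper[OF dW _ that]) (use pos in \<open>auto simp: h_def less_imp_le\<close>)
    have "((\<lambda>t. W t) \<longlongrightarrow> (c - c) * (c - c)) at_top"
      unfolding W_def by (intro tendsto_intros lt)
    hence "\<forall>\<^sub>F t in at_top. W t < W x" using Wp[of x] by (simp add: order_tendsto_iff)
    then obtain T where T: "\<And>t. t \<ge> T \<Longrightarrow> W t < W x" unfolding eventually_at_top_linorder by blast
    have "W (max x T) < W x" by (rule T) simp
    moreover have "W x \<le> W (max x T)" by (rule Wi) simp
    ultimately show False by simp
  qed
  define \<kappa> where "\<kappa> = 2 * sqrt (2 * k)"
  have kp: "\<kappa> > 0" using k by (simp add: \<kappa>_def)
  have Wd: "2 * ((s t - c) * f t) \<le> - \<kappa> * W t" if t: "t \<ge> X0" for t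
  proof -
    have "sqrt (2 * k * W t) \<le> sqrt (f t * f t)" using fl[OF t] by (rule real_sqrt_le_mono)
    hence "sqrt (2 * k) * \<bar>s t - c\<bar> \<le> \<bar>f t\<bar>"
      by (simp add: W_def real_sqrt_mult)
    hence "sqrt (2 * k) * \<bar>s t - c\<bar> * \<bar>s t - c\<bar> \<le> \<bar>f t\<bar> * \<bar>s t - c\<bar>"
      by (intro mult_right_mono) auto
    moreover have "\<bar>f t\<bar> * \<bar>s t - c\<bar> = - ((s t - c) * f t)" using hneg[OF t]
      by (simp add: h_def abs_mult[symmetric] mult.commute)
    moreover have "\<bar>s t - c\<bar> * \<bar>s t - c\<bar> = W t" by (simp add: W_def abs_mult_self_eq)
    ultimately have "sqrt (2 * k) * W t \<le> - ((s t - c) * f t)" by (metis mult.assoc)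
    then show ?thesis unfolding \<kappa>_def by linarith
  qed
  define A where "A = W X0 * exp (\<kappa> * X0)"
  have Wdec: "W x \<le> A * exp (- \<kappa> * x)" if x: "x \<ge> X0" for x
  proof -
    define q where "q t = - (W t * exp (\<kappa> * t))" for t
    have "q X0 \<le> q x"
    proof (rule mono_helper[OF _ _ x])
      fix t assume t: "X0 \<le> t" "t \<le> x"
      show "(q has_real_derivative - (2 * ((s t - c) * f t) * exp (\<kappa> * t) + \<kappa> * W t * exp (\<kappa> * t))) (at t)"
        unfolding q_def by (rule derivative_eq_intros dW refl | simp)+
      have "2 * ((s t - c) * f t) + \<kappa> * W t \<le> 0" using Wd[OF t(1)] by linarith
      then show "0 \<le> - (2 * ((s t - c) * f t) * exp (\<kappa> * t) + \<kappa> * W t * exp (\<kappa> * t))"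
        by (simp add: mult_nonpos_nonneg flip: distrib_right)
    qed
    hence "W x * exp (\<kappa> * x) \<le> A" by (simp add: q_def A_def)
    hence "W x * exp (\<kappa> * x) * exp (- \<kappa> * x) \<le> A * exp (- \<kappa> * x)" by (intro mult_right_mono) auto
    then show ?thesis by (simp add: mult.assoc flip: exp_add)
  qed
  define B where "B = 2 * \<bar>M\<bar> * A + L * L * A"
  have "\<forall>x\<ge>X0. (f x)\<^sup>2 \<le> B * exp (-\<kappa>*x) \<and> (deriv U (s x))\<^sup>2 \<le> B * exp (-\<kappa>*x)"
  proof (intro allI impI)
    fix x assume x: "x \<ge> X0"
    note lx = loc[OF X0[OF x]]
    have A0: "A \<ge> 0" using Wp[of X0] by (simp add: A_def)
    have WE: "W x \<le> A * exp (- \<kappa> * x)" by (rule Wdec[OF x])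
    have f2: "(f x)\<^sup>2 \<le> 2 * \<bar>M\<bar> * W x"
    proof -
      have u: "U (s x) \<le> M * (s x - c)\<^sup>2" using lx by blast
      have "M * (s x - c)\<^sup>2 \<le> \<bar>M\<bar> * (s x - c)\<^sup>2" by (intro mult_right_mono) auto
      then show ?thesis using u unfolding W_def power2_eq_square hE by linarith
    qed
    have g2: "(deriv U (s x))\<^sup>2 \<le> L * L * W x"
    proof -
      have "\<bar>deriv U (s x)\<bar> * \<bar>deriv U (s x)\<bar> \<le> (L * \<bar>s x - c\<bar>) * (L * \<bar>s x - c\<bar>)"
        using lx by (intro mult_mono) auto
      then show ?thesis by (simp add: W_def power2_eq_square abs_mult_self_eq algebra_simps)
    qed
    have "2 * \<bar>M\<bar> * W x \<le> 2 * \<bar>M\<bar> * (A * exp (- \<kappa> * x))" using WE by (intro mult_left_mono) auto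
    moreover have "L * L * W x \<le> L * L * (A * exp (- \<kappa> * x))" using WE by (intro mult_left_mono) auto
    moreover have "0 \<le> L * L * (A * exp (- \<kappa> * x))" "0 \<le> 2 * \<bar>M\<bar> * (A * exp (- \<kappa> * x))"
      using A0 by auto
    ultimately show "(f x)\<^sup>2 \<le> B * exp (- \<kappa> * x) \<and> (deriv U (s x))\<^sup>2 \<le> B * exp (- \<kappa> * x)"
      using f2 g2 unfolding B_def by (simp add: algebra_simps)
  qed
  then show ?thesis using kp by blast
qed

lemma kink_basic:
  assumes "is_kink a U s"
  shows "\<And>x. (s has_real_derivative deriv s x) (at x)"
    "\<And>x. (deriv s has_real_derivative deriv U (s x)) (at x)"
  using assms unfolding is_kink_def
  by (metis DERIV_deriv_iff_real_differentiable)+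

lemma kink_decay:
  assumes a: "a > 0" and U: "cond_U1 a U" and K: "is_kink a U s"
  shows "\<exists>B \<kappa>. \<kappa> > 0 \<and> (\<forall>t. (deriv s t)\<^sup>2 \<le> B * exp (-\<kappa> * \<bar>t\<bar>) \<and> (deriv U (s t))\<^sup>2 \<le> B * exp (-\<kappa> * \<bar>t\<bar>))"
proof -
  have sm: "smooth_fun U" and Ua: "U a = 0" "U (-a) = 0" "deriv U a = 0" "deriv U (-a) = 0"
    and U2: "deriv (deriv U) a > 0" "deriv (deriv U) (-a) > 0"
    using U unfolding cond_U1_def by auto
  note d = smooth_derivs[OF sm]
  note kb = kink_basic[OF K]
  have lt: "(s \<longlongrightarrow> a) at_top" and lb: "(s \<longlongrightarrow> -a) at_bot" using K unfolding is_kink_def by auto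
  define f where "f = deriv s"
  define g where "g t = deriv U (s t)" for t
  have cs: "isCont s x" for x using kb(1) DERIV_isCont by blast
  have cf: "isCont f x" for x using kb(2) DERIV_isCont unfolding f_def by blast
  have cg: "isCont g x" for x unfolding g_def
    by (rule isCont_o2[OF cs DERIV_isCont[OF d(2)]])
  obtain X1 B1 k1 where k1: "k1 > 0" and top: "\<And>x. x \<ge> X1 \<Longrightarrow> (f x)\<^sup>2 \<le> B1 * exp (-k1*x) \<and> (g x)\<^sup>2 \<le> B1 * exp (-k1*x)"
    using decay_top[OF sm Ua(1) Ua(3) U2(1) kb(1) kb(2) lt lb] a unfolding f_def g_def by auto
  define r where "r x = s (- x)" for x
  define fr where "fr x = - f (- x)" for x
  have dm: "((\<lambda>x::real. - x) has_real_derivative -1) (at x)" for x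
    by (rule derivative_eq_intros refl | simp)+
  have dr: "(r has_real_derivative fr x) (at x)" for x
    using DERIV_chain2[OF kb(1) dm, of x] unfolding r_def fr_def f_def by simp
  have dfr: "(fr has_real_derivative deriv U (r x)) (at x)" for x
    using DERIV_minus[OF DERIV_chain2[OF kb(2) dm, of x]] unfolding r_def fr_def f_def by simp
  have rt: "(r \<longlongrightarrow> -a) at_top" unfolding r_def
    using filterlim_compose[OF lb filterlim_uminus_at_bot_at_top] by simp
  have rb: "(r \<longlongrightarrow> a) at_bot" unfolding r_def
    using filterlim_compose[OF lt filterlim_uminus_at_top_at_bot] by simp
  obtain X2 B2 k2 where k2: "k2 > 0" and bot: "\<And>x. x \<ge> X2 \<Longrightarrow> (fr x)\<^sup>2 \<le> B2 * exp (-k2*x) \<and> (deriv U (r x))\<^sup>2 \<le> B2 * exp (-k2*x)"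
    using decay_top[OF sm Ua(2) Ua(4) U2(2) dr dfr rt rb] a by auto
  define T where "T = max (max X1 X2) 0"
  have "continuous_on {-T..T} (\<lambda>t. (f t)\<^sup>2 + (g t)\<^sup>2)"
    by (intro continuous_at_imp_continuous_on ballI continuous_intros cf cg)
  then obtain Mf where Mf: "\<And>t. t \<in> {-T..T} \<Longrightarrow> norm ((f t)\<^sup>2 + (g t)\<^sup>2) \<le> Mf"
    using continuous_on_compact_bound[OF compact_Icc] by blast
  define \<kappa> where "\<kappa> = min k1 k2"
  define B where "B = max (max B1 B2) (Mf * exp (\<kappa> * T))"
  have kp: "\<kappa> > 0" using k1 k2 by (simp add: \<kappa>_def)
  have main: "(f t)\<^sup>2 \<le> B * exp (-\<kappa> * \<bar>t\<bar>) \<and> (g t)\<^sup>2 \<le> B * exp (-\<kappa> * \<bar>t\<bar>)" for t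
  proof -
    have step: "P \<le> Bi * exp (-ki * x) \<Longrightarrow> 0 \<le> P \<Longrightarrow> x \<ge> 0 \<Longrightarrow> \<kappa> \<le> ki \<Longrightarrow> Bi \<le> B
        \<Longrightarrow> P \<le> B * exp (-\<kappa> * x)" for P Bi ki x
    proof -
      assume h: "P \<le> Bi * exp (-ki * x)" "0 \<le> P" "x \<ge> 0" "\<kappa> \<le> ki" "Bi \<le> B"
      have "Bi \<ge> 0"
      proof (rule ccontr)
        assume "\<not> 0 \<le> Bi" hence "Bi * exp (-ki * x) < 0" by (simp add: mult_neg_pos)
        with h(1,2) show False by linarith
      qed
      moreover have "exp (-ki * x) \<le> exp (-\<kappa> * x)" using h(3,4) by (simp add: mult_right_mono)
      ultimately have "Bi * exp (-ki * x) \<le> B * exp (-\<kappa> * x)" using h(5) by (intro mult_mono) auto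
      with h(1) show ?thesis by linarith
    qed
    consider "t \<ge> T" | "t \<le> -T" | "\<bar>t\<bar> \<le> T" by linarith
    then show ?thesis
    proof cases
      case 1
      have "t \<ge> X1" "t \<ge> 0" using 1 by (auto simp: T_def)
      from top[OF this(1)] have h: "(f t)\<^sup>2 \<le> B1 * exp (-k1*t)" "(g t)\<^sup>2 \<le> B1 * exp (-k1*t)" by auto
      have hk: "\<kappa> \<le> k1" "B1 \<le> B" by (auto simp: \<kappa>_def B_def)
      show ?thesis using step[OF h(1) _ _ hk] step[OF h(2) _ _ hk] \<open>t \<ge> 0\<close> by simp
    next
      case 2
      have "-t \<ge> X2" "-t \<ge> 0" using 2 by (auto simp: T_def)
      from bot[OF this(1)] this(2) have "(f t)\<^sup>2 \<le> B2 * exp (-k2 * (-t))" "(g t)\<^sup>2 \<le> B2 * exp (-k2 * (-t))"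
        by (simp_all add: fr_def r_def g_def)
      note h = this
      have hk: "\<kappa> \<le> k2" "B2 \<le> B" by (auto simp: \<kappa>_def B_def)
      show ?thesis using step[OF h(1) _ _ hk] step[OF h(2) _ _ hk] \<open>-t \<ge> 0\<close> by simp
    next
      case 3
      have "t \<in> {-T..T}" using 3 by (simp add: abs_le_iff)
      from Mf[OF this] have Mt: "(f t)\<^sup>2 + (g t)\<^sup>2 \<le> Mf" by simp
      have "Mf \<le> Mf * exp (\<kappa> * T) * exp (-\<kappa> * \<bar>t\<bar>)"
      proof -
        have "(f t)\<^sup>2 + (g t)\<^sup>2 \<ge> 0" by simp
        hence "Mf \<ge> 0" using Mt by linarith
        moreover have "exp (\<kappa> * T) * exp (-\<kappa> * \<bar>t\<bar>) \<ge> 1" using 3 kp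
          by (simp flip: exp_add add: mult_left_mono)
        ultimately have "Mf * 1 \<le> Mf * (exp (\<kappa> * T) * exp (-\<kappa> * \<bar>t\<bar>))" by (intro mult_left_mono)
        then show ?thesis by (simp add: mult.assoc)
      qed
      also have "\<dots> \<le> B * exp (-\<kappa> * \<bar>t\<bar>)" by (intro mult_right_mono) (auto simp: B_def)
      finally have "Mf \<le> B * exp (-\<kappa> * \<bar>t\<bar>)" .
      moreover have "(f t)\<^sup>2 \<ge> 0" "(g t)\<^sup>2 \<ge> 0" by simp_all
      ultimately show ?thesis using Mt by linarith
    qed
  qed
  show ?thesis using main kp unfolding f_def g_def by blast
qed

lemma exp_abs_integrable:
  fixes c b :: real assumes c: "c > 0"
  shows "integrable lborel (\<lambda>x. exp (- c * \<bar>x - b\<bar>))"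
proof -
  have i1: "integrable lborel (\<lambda>x. indicator {0<..} x * exp (- (x * c)))"
    using integrable_I0i_exp_mscale[OF c] unfolding set_integrable_def by simp
  have i2: "integrable lborel (\<lambda>x. indicator {0<..} (-x) * exp (- ((-x) * c)))"
    using lborel_integrable_real_affine_iff[of "-1" "\<lambda>x. indicator {0<..} x * exp (- (x * c))" 0] i1 by simp
  have i3: "integrable lborel (indicator {-1..1} :: real \<Rightarrow> real)"
    by (rule integrable_real_indicator) auto
  have i0: "integrable lborel (\<lambda>x. exp (- c * \<bar>x\<bar>))"
  proof (rule Bochner_Integration.integrable_bound[OF Bochner_Integration.integrable_add[OF Bochner_Integration.integrable_add[OF i1 i2] i3]])
    show "(\<lambda>x. exp (- c * \<bar>x\<bar>)) \<in> borel_measurable lborel" by measurable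
    show "AE x in lborel. norm (exp (- c * \<bar>x\<bar>)) \<le> norm (indicator {0<..} x * exp (- (x * c)) + indicator {0<..} (-x) * exp (- ((-x) * c)) + indicator {-1..1} x)"
    proof (rule AE_I2)
      fix x :: real
      have nn: "0 \<le> indicator {0<..} x * exp (- (x * c)) + indicator {0<..} (-x) * exp (- ((-x) * c)) + (indicator {-1..1} x :: real)"
        by (simp add: indicator_def)
      have "exp (- c * \<bar>x\<bar>) \<le> indicator {0<..} x * exp (- (x * c)) + indicator {0<..} (-x) * exp (- ((-x) * c)) + indicator {-1..1} x"
      proof (cases x "0::real" rule: linorder_cases)
        case less then show ?thesis by (simp add: indicator_def mult.commute)
      next
        case equal then show ?thesis by (simp add: indicator_def)
      next
        case greater then show ?thesis by (simp add: indicator_def mult.commute)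
      qed
      then show "norm (exp (- c * \<bar>x\<bar>)) \<le> norm (indicator {0<..} x * exp (- (x * c)) + indicator {0<..} (-x) * exp (- ((-x) * c)) + (indicator {-1..1} x :: real))"
        using nn by simp
    qed
  qed
  show ?thesis
    using lborel_integrable_real_affine_iff[of 1 "\<lambda>x. exp (- c * \<bar>x\<bar>)" "-b"] i0 by simp
qed

lemma prod_integrable:
  fixes \<phi> \<psi> :: "real \<Rightarrow> real"
  assumes c: "c > 0" and cp: "continuous_on UNIV \<phi>" and cq: "continuous_on UNIV \<psi>"
    and bp: "\<And>x. (\<phi> x)\<^sup>2 \<le> C * exp (- c * \<bar>x - b\<bar>)" and bq: "\<And>x. (\<psi> x)\<^sup>2 \<le> C * exp (- c * \<bar>x - b\<bar>)"
  shows "integrable lborel (\<lambda>x. \<phi> x * \<psi> x)"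
proof (rule Bochner_Integration.integrable_bound[OF integrable_mult_right[OF exp_abs_integrable[OF c, of b], of C]])
  show "(\<lambda>x. \<phi> x * \<psi> x) \<in> borel_measurable lborel"
    using borel_measurable_continuous_onI[OF cp] borel_measurable_continuous_onI[OF cq] by measurable
  show "AE x in lborel. norm (\<phi> x * \<psi> x) \<le> norm (C * exp (- c * \<bar>x - b\<bar>))"
  proof (rule AE_I2)
    fix x
    have "\<bar>2 * (\<phi> x * \<psi> x)\<bar> \<le> \<phi> x * \<phi> x + \<psi> x * \<psi> x" by (rule abs_2mult_le)
    then have "\<bar>\<phi> x * \<psi> x\<bar> \<le> C * exp (- c * \<bar>x - b\<bar>)"
      using bp[of x] bq[of x] by (simp add: power2_eq_square abs_mult)
    then show "norm (\<phi> x * \<psi> x) \<le> norm (C * exp (- c * \<bar>x - b\<bar>))" by simp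
  qed
qed

lemma pos_integral:
  fixes h :: "real \<Rightarrow> real"
  assumes ch: "continuous_on UNIV h" and nn: "\<And>x. h x \<ge> 0" and ih: "integrable lborel h" and p: "h x0 > 0"
  shows "integral\<^sup>L lborel h > 0"
proof -
  obtain e where e: "e > 0" and he: "\<And>y. dist y x0 < e \<Longrightarrow> dist (h y) (h x0) < h x0 / 2"
    using ch p unfolding continuous_on_eq_continuous_at[OF open_UNIV] continuous_at_eps_delta
    by (metis UNIV_I half_gt_zero)
  define A where "A = {x0 - e/2 .. x0 + e/2}"
  have ind: "indicator A y * (h x0 / 2) \<le> h y" for y
  proof (cases "y \<in> A")
    case True
    then have "dist y x0 < e" using e by (auto simp: A_def dist_real_def)
    from he[OF this] have "\<bar>h y - h x0\<bar> < h x0 / 2" by (simp add: dist_real_def)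
    then have "h x0 / 2 < h y" using abs_ge_minus_self[of "h y - h x0"] by linarith
    then show ?thesis using True by (simp add: indicator_def)
  next
    case False then show ?thesis using nn[of y] by simp
  qed
  have iA: "integrable lborel (\<lambda>y. indicator A y * (h x0 / 2) :: real)"
    by (intro integrable_mult_left integrable_real_indicator) (auto simp: A_def emeasure_lborel_Icc_eq)
  have "(\<integral>y. indicator A y * (h x0 / 2) \<partial>lborel) \<le> integral\<^sup>L lborel h"
    by (rule integral_mono[OF iA ih ind])
  moreover have "(\<integral>y. indicator A y * (h x0 / 2) \<partial>lborel) = e * (h x0 / 2)"
    using e by (simp add: A_def)
  moreover have "e * (h x0 / 2) > 0" using e p by simp
  ultimately show ?thesis by linarith
qed

lemma sq_sum_le: fixes a b :: real shows "(a + b)\<^sup>2 \<le> 2 * a\<^sup>2 + 2 * b\<^sup>2"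
proof -
  have "0 \<le> (a - b)\<^sup>2" by simp
  then show ?thesis by (simp add: power2_eq_square algebra_simps)
qed

lemma poly_exp_bound:
  fixes u \<epsilon> :: real assumes "\<epsilon> > 0" "u \<ge> 0"
  shows "u\<^sup>2 \<le> (4 / \<epsilon>\<^sup>2) * exp (\<epsilon> * u)"
proof -
  have "\<epsilon> * u / 2 \<le> exp (\<epsilon> * u / 2)" using exp_ge_add_one_self[of "\<epsilon> * u / 2"] by linarith
  moreover have "0 \<le> \<epsilon> * u / 2" using assms by simp
  ultimately have "(\<epsilon> * u / 2)\<^sup>2 \<le> (exp (\<epsilon> * u / 2))\<^sup>2" by (rule power_mono)
  also have "(exp (\<epsilon> * u / 2))\<^sup>2 = exp (\<epsilon> * u)" by (simp flip: exp_double)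
  finally have "\<epsilon>\<^sup>2 * u\<^sup>2 / 4 \<le> exp (\<epsilon> * u)" by (simp add: power_divide power_mult_distrib)
  then show ?thesis using assms by (simp add: field_simps)
qed

lemma comp_bound:
  fixes F G :: "real \<Rightarrow> real"
  assumes bF: "\<And>t. (F t)\<^sup>2 \<le> B * exp (-\<kappa> * \<bar>t\<bar>)" and bG: "\<And>t. (G t)\<^sup>2 \<le> B * exp (-\<kappa> * \<bar>t\<bar>)"
    and k: "\<kappa> > 0" and g: "\<gamma> > 0"
  shows "\<exists>C. \<forall>x. ((\<alpha> + \<beta> * (x - b)) * F (\<gamma> * (x - b)) + (\<alpha>' + \<beta>' * (x - b)) * G (\<gamma> * (x - b)))\<^sup>2
            \<le> C * exp (- (\<kappa> * \<gamma> / 2) * \<bar>x - b\<bar>)"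
proof -
  define \<epsilon> where "\<epsilon> = \<kappa> * \<gamma> / 2"
  have ep: "\<epsilon> > 0" using k g by (simp add: \<epsilon>_def)
  have B0: "B \<ge> 0"
  proof -
    have "(F 0)\<^sup>2 \<le> B" using bF[of 0] by simp
    moreover have "0 \<le> (F 0)\<^sup>2" by simp
    ultimately show ?thesis by linarith
  qed
  define K1 where "K1 = 2 * \<alpha>\<^sup>2 + 2 * \<beta>\<^sup>2 * (4 / \<epsilon>\<^sup>2)"
  define K2 where "K2 = 2 * \<alpha>'\<^sup>2 + 2 * \<beta>'\<^sup>2 * (4 / \<epsilon>\<^sup>2)"
  have "((\<alpha> + \<beta> * (x - b)) * F (\<gamma> * (x - b)) + (\<alpha>' + \<beta>' * (x - b)) * G (\<gamma> * (x - b)))\<^sup>2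
            \<le> (2 * B * (K1 + K2)) * exp (- \<epsilon> * \<bar>x - b\<bar>)" for x
  proof -
    define y where "y = x - b"
    define u where "u = \<bar>y\<bar>"
    define e1 where "e1 = exp (- \<epsilon> * u)"
    define e2 where "e2 = exp (- \<kappa> * \<bar>\<gamma> * y\<bar>)"
    have u0: "u \<ge> 0" by (simp add: u_def)
    have e2e: "e2 = exp (-\<epsilon> * u) * exp (-\<epsilon> * u)"
      using g by (simp add: e2_def u_def \<epsilon>_def abs_mult flip: exp_add)
    have e12: "e2 \<le> e1" unfolding e2e e1_def using ep u0 by (simp add: mult_le_one)
    have y2: "y\<^sup>2 * e2 \<le> (4 / \<epsilon>\<^sup>2) * e1"
    proof -
      have "y\<^sup>2 = u\<^sup>2" by (simp add: u_def)
      also have "\<dots> \<le> (4 / \<epsilon>\<^sup>2) * exp (\<epsilon> * u)" by (rule poly_exp_bound[OF ep u0])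
      finally have "y\<^sup>2 * e2 \<le> (4 / \<epsilon>\<^sup>2) * exp (\<epsilon> * u) * e2" by (rule mult_right_mono) (simp add: e2_def)
      then have A: "y\<^sup>2 * e2 \<le> (4 / \<epsilon>\<^sup>2) * (exp (\<epsilon> * u) * e2)" by (simp only: mult.assoc)
      have Bq: "exp (\<epsilon> * u) * e2 = e1" unfolding e2e e1_def by (simp flip: exp_add)
      show ?thesis using A unfolding Bq .
    qed
    have P: "(p0 + p1 * y)\<^sup>2 * (Fv)\<^sup>2 \<le> B * ((2 * p0\<^sup>2 + 2 * p1\<^sup>2 * (4 / \<epsilon>\<^sup>2)) * e1)"
      if Fv: "(Fv)\<^sup>2 \<le> B * e2" for p0 p1 Fv
    proof -
      have "(p0 + p1 * y)\<^sup>2 * (Fv)\<^sup>2 \<le> (2 * p0\<^sup>2 + 2 * (p1 * y)\<^sup>2) * (B * e2)"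
        by (intro mult_mono sq_sum_le Fv) auto
      also have "\<dots> = B * (2 * p0\<^sup>2 * e2 + 2 * p1\<^sup>2 * (y\<^sup>2 * e2))" by (simp add: algebra_simps power_mult_distrib)
      also have "\<dots> \<le> B * (2 * p0\<^sup>2 * e1 + 2 * p1\<^sup>2 * ((4 / \<epsilon>\<^sup>2) * e1))"
        using e12 y2 B0 by (intro mult_left_mono add_mono) auto
      also have "\<dots> = B * ((2 * p0\<^sup>2 + 2 * p1\<^sup>2 * (4 / \<epsilon>\<^sup>2)) * e1)" by (simp add: algebra_simps)
      finally show ?thesis .
    qed
    have Fb: "(F (\<gamma> * y))\<^sup>2 \<le> B * e2" using bF unfolding e2_def by simp
    have Gb: "(G (\<gamma> * y))\<^sup>2 \<le> B * e2" using bG unfolding e2_def by simp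
    have "((\<alpha> + \<beta> * y) * F (\<gamma> * y) + (\<alpha>' + \<beta>' * y) * G (\<gamma> * y))\<^sup>2
        \<le> 2 * ((\<alpha> + \<beta> * y)\<^sup>2 * (F (\<gamma> * y))\<^sup>2) + 2 * ((\<alpha>' + \<beta>' * y)\<^sup>2 * (G (\<gamma> * y))\<^sup>2)"
      using sq_sum_le[of "(\<alpha> + \<beta> * y) * F (\<gamma> * y)" "(\<alpha>' + \<beta>' * y) * G (\<gamma> * y)"] by (simp only: power_mult_distrib)
    also have "\<dots> \<le> 2 * (B * (K1 * e1)) + 2 * (B * (K2 * e1))"
      using P[OF Fb, of \<alpha> \<beta>] P[OF Gb, of \<alpha>' \<beta>'] unfolding K1_def K2_def by linarith
    also have "\<dots> = (2 * B * (K1 + K2)) * exp (- \<epsilon> * \<bar>x - b\<bar>)"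
      by (simp add: e1_def u_def y_def algebra_simps)
    finally show ?thesis by (simp add: y_def)
  qed
  then show ?thesis unfolding \<epsilon>_def by blast
qed

lemma lgamma_deriv:
  assumes v1: "1 - v\<^sup>2 > (0::real)"
  shows "(lgamma has_real_derivative v / (sqrt (1 - v\<^sup>2) * (1 - v\<^sup>2))) (at v)"
proof -
  have s: "sqrt (1 - v\<^sup>2) > 0" using v1 by simp
  have d1: "((\<lambda>z. 1 - z\<^sup>2) has_real_derivative - (2 * v)) (at v)"
    by (rule derivative_eq_intros refl)+ simp
  have d2: "((\<lambda>z. sqrt (1 - z\<^sup>2)) has_real_derivative inverse (sqrt (1 - v\<^sup>2)) / 2 * (- (2 * v))) (at v)"
    by (rule DERIV_chain2[OF DERIV_real_sqrt[OF v1] d1])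
  have d3: "((\<lambda>z. inverse (sqrt (1 - z\<^sup>2))) has_real_derivative - ((inverse (sqrt (1 - v\<^sup>2)) / 2 * (- (2 * v))) * inverse ((sqrt (1 - v\<^sup>2)) ^ Suc (Suc 0)))) (at v)"
    by (rule DERIV_inverse_fun[OF d2]) (use s in simp)
  have e: "- ((inverse (sqrt (1 - v\<^sup>2)) / 2 * (- (2 * v))) * inverse ((sqrt (1 - v\<^sup>2)) ^ Suc (Suc 0))) = v / (sqrt (1 - v\<^sup>2) * (1 - v\<^sup>2))"
    using v1 s by (simp add: field_simps)
  have "lgamma = (\<lambda>z. inverse (sqrt (1 - z\<^sup>2)))" by (rule ext) (simp add: lgamma_def divide_inverse)
  then show ?thesis using d3 unfolding e by simp
qed

lemma Omega_lin:
  assumes "integrable lborel (\<lambda>x. fst Y1 x * snd Z x)" "integrable lborel (\<lambda>x. fst Y2 x * snd Z x)"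
    "integrable lborel (\<lambda>x. snd Y1 x * fst Z x)" "integrable lborel (\<lambda>x. snd Y2 x * fst Z x)"
  shows "Omega (lin_comb c1 Y1 c2 Y2) Z = c1 * Omega Y1 Z + c2 * Omega Y2 Z"
proof -
  have "(\<integral>x. (c1 * fst Y1 x + c2 * fst Y2 x) * snd Z x \<partial>lborel)
      = (\<integral>x. c1 * (fst Y1 x * snd Z x) + c2 * (fst Y2 x * snd Z x) \<partial>lborel)"
    by (simp add: algebra_simps)
  also have "\<dots> = c1 * (\<integral>x. fst Y1 x * snd Z x \<partial>lborel) + c2 * (\<integral>x. fst Y2 x * snd Z x \<partial>lborel)"
    using assms by simp
  finally have 1: "(\<integral>x. (c1 * fst Y1 x + c2 * fst Y2 x) * snd Z x \<partial>lborel) = \<dots>" .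
  have "(\<integral>x. (c1 * snd Y1 x + c2 * snd Y2 x) * fst Z x \<partial>lborel)
      = (\<integral>x. c1 * (snd Y1 x * fst Z x) + c2 * (snd Y2 x * fst Z x) \<partial>lborel)"
    by (simp add: algebra_simps)
  also have "\<dots> = c1 * (\<integral>x. snd Y1 x * fst Z x \<partial>lborel) + c2 * (\<integral>x. snd Y2 x * fst Z x \<partial>lborel)"
    using assms by simp
  finally have 2: "(\<integral>x. (c1 * snd Y1 x + c2 * snd Y2 x) * fst Z x \<partial>lborel) = \<dots>" .
  show ?thesis unfolding Omega_def lin_comb_def using 1 2 by (simp add: algebra_simps)
qed

lemma Omega_self: "Omega Y Y = 0"
  by (simp add: Omega_def mult.commute)

lemma Omega_anti: "Omega Y Z = - Omega Z Y"
  by (simp add: Omega_def mult.commute)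

lemma prod_integrable2:
  fixes \<phi> \<psi> :: "real \<Rightarrow> real"
  assumes c: "c > 0" and cp: "continuous_on UNIV \<phi>" and cq: "continuous_on UNIV \<psi>"
    and bp: "\<And>x. (\<phi> x)\<^sup>2 \<le> C1 * exp (- c * \<bar>x - b\<bar>)" and bq: "\<And>x. (\<psi> x)\<^sup>2 \<le> C2 * exp (- c * \<bar>x - b\<bar>)"
  shows "integrable lborel (\<lambda>x. \<phi> x * \<psi> x)"
proof (rule prod_integrable[OF c cp cq, of "C1 + C2" b])
  fix x
  have "0 \<le> (\<psi> x)\<^sup>2" "0 \<le> (\<phi> x)\<^sup>2" by simp_all
  then have "0 \<le> C1 * exp (- c * \<bar>x - b\<bar>)" "0 \<le> C2 * exp (- c * \<bar>x - b\<bar>)"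
    using bp[of x] bq[of x] by linarith+
  then show "(\<phi> x)\<^sup>2 \<le> (C1 + C2) * exp (- c * \<bar>x - b\<bar>)" "(\<psi> x)\<^sup>2 \<le> (C1 + C2) * exp (- c * \<bar>x - b\<bar>)"
    using bp[of x] bq[of x] by (simp_all add: distrib_right)
qed

theorem lemma3p2:
  fixes a :: real and U s :: "real \<Rightarrow> real" and b v :: real
  assumes "a > 0" and "cond_U1 a U" and "is_kink a U s" and "\<bar>v\<bar> < 1"
  shows "symplectic_subspace (span2 (tau1 s b v) (tau2 s b v))"
proof -
  obtain Bd \<kappa> where kp: "\<kappa> > 0" and bd: "\<And>t. (deriv s t)\<^sup>2 \<le> Bd * exp (-\<kappa> * \<bar>t\<bar>) \<and> (deriv U (s t))\<^sup>2 \<le> Bd * exp (-\<kappa> * \<bar>t\<bar>)"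
    using kink_decay[OF assms(1-3)] by blast
  have sm: "smooth_fun U" using assms(2) unfolding cond_U1_def by auto
  note d = smooth_derivs[OF sm]
  note kb = kink_basic[OF assms(3)]
  define F where "F = deriv s"
  define G where "G t = deriv U (s t)" for t
  have bF: "\<And>t. (F t)\<^sup>2 \<le> Bd * exp (-\<kappa> * \<bar>t\<bar>)" and bG: "\<And>t. (G t)\<^sup>2 \<le> Bd * exp (-\<kappa> * \<bar>t\<bar>)"
    using bd by (auto simp: F_def G_def)
  have dF: "\<And>x. (s has_real_derivative F x) (at x)" using kb(1) by (simp add: F_def)
  have dG: "\<And>x. (F has_real_derivative G x) (at x)" using kb(2) by (simp add: F_def G_def)
  have cs: "isCont s x" for x using dF DERIV_isCont by blast
  have cF: "continuous_on UNIV F" using dF dG by (intro continuous_at_imp_continuous_on ballI) (metis DERIV_isCont)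
  have cG: "continuous_on UNIV G" unfolding G_def
    by (intro continuous_at_imp_continuous_on ballI isCont_o2[OF cs DERIV_isCont[OF d(2)]])
  have v1: "1 - v\<^sup>2 > 0" using assms(4) by (simp add: abs_square_less_1)
  define \<gamma> where "\<gamma> = lgamma v"
  have gp: "\<gamma> > 0" using v1 by (simp add: \<gamma>_def lgamma_def)
  define D where "D = v / (sqrt (1 - v\<^sup>2) * (1 - v\<^sup>2))"
  have dL: "(lgamma has_real_derivative D) (at v)" unfolding D_def by (rule lgamma_deriv[OF v1])
  have vD: "v * D \<ge> 0"
  proof -
    have "v * D = v * v / (sqrt (1 - v\<^sup>2) * (1 - v\<^sup>2))" by (simp add: D_def)
    moreover have "sqrt (1 - v\<^sup>2) * (1 - v\<^sup>2) > 0" using v1 by simp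
    ultimately show ?thesis by simp
  qed
  have psi_eq: "psi_v s w = (\<lambda>y. s (lgamma w * y))" for w by (rule ext) (simp add: psi_v_def)
  have dpsi: "deriv (psi_v s w) = (\<lambda>y. lgamma w * F (lgamma w * y))" for w
  proof (rule ext)
    fix y
    have dl: "((\<lambda>y. lgamma w * y) has_real_derivative lgamma w) (at y)"
      by (auto intro!: derivative_eq_intros)
    have "((\<lambda>y. s (lgamma w * y)) has_real_derivative F (lgamma w * y) * lgamma w) (at y)"
      by (rule DERIV_chain2[OF dF dl])
    then show "deriv (psi_v s w) y = lgamma w * F (lgamma w * y)"
      unfolding psi_eq by (simp add: DERIV_imp_deriv mult.commute)
  qed
  have pi_eq: "pi_v s w = (\<lambda>y. - w * (lgamma w * F (lgamma w * y)))" for w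
    by (rule ext) (simp add: pi_v_def dpsi)
  have dpi: "deriv (pi_v s v) y = - v * (\<gamma> * (G (\<gamma> * y) * \<gamma>))" for y
  proof -
    have dl: "((\<lambda>y. \<gamma> * y) has_real_derivative \<gamma>) (at y)"
      by (auto intro!: derivative_eq_intros)
    have "((\<lambda>y. F (\<gamma> * y)) has_real_derivative G (\<gamma> * y) * \<gamma>) (at y)"
      by (rule DERIV_chain2[OF dG dl])
    then have "((\<lambda>y. - v * (\<gamma> * F (\<gamma> * y))) has_real_derivative - v * (\<gamma> * (G (\<gamma> * y) * \<gamma>))) (at y)"
      by (intro DERIV_cmult)
    then show ?thesis unfolding pi_eq \<gamma>_def by (simp add: DERIV_imp_deriv)
  qed
  have dpsiw: "((\<lambda>w. psi_v s w y) has_real_derivative F (\<gamma> * y) * (D * y)) (at v)" for y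
  proof -
    have dl: "((\<lambda>w. lgamma w * y) has_real_derivative D * y) (at v)"
      using DERIV_mult[OF dL DERIV_const[of y]] by simp
    show ?thesis using DERIV_chain2[OF dF dl] by (simp add: psi_v_def \<gamma>_def)
  qed
  have dpiw: "((\<lambda>w. pi_v s w y) has_real_derivative
      (- 1) * (\<gamma> * F (\<gamma> * y)) + (D * F (\<gamma> * y) + G (\<gamma> * y) * (D * y) * \<gamma>) * (- v)) (at v)" for y
  proof -
    have dl: "((\<lambda>w. lgamma w * y) has_real_derivative D * y) (at v)"
      using DERIV_mult[OF dL DERIV_const[of y]] by simp
    have d1: "((\<lambda>w. F (lgamma w * y)) has_real_derivative G (\<gamma> * y) * (D * y)) (at v)"
      using DERIV_chain2[OF dG dl] by (simp add: \<gamma>_def)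
    have d2: "((\<lambda>w. lgamma w * F (lgamma w * y)) has_real_derivative D * F (\<gamma> * y) + G (\<gamma> * y) * (D * y) * \<gamma>) (at v)"
      using DERIV_mult[OF dL d1] by (simp add: \<gamma>_def)
    have dm: "((\<lambda>w::real. - w) has_real_derivative - 1) (at v)"
      by (auto intro!: derivative_eq_intros)
    have "((\<lambda>w. - w * (lgamma w * F (lgamma w * y))) has_real_derivative
      (- 1) * (\<gamma> * F (\<gamma> * y)) + (D * F (\<gamma> * y) + G (\<gamma> * y) * (D * y) * \<gamma>) * (- v)) (at v)"
      using DERIV_mult[OF dm d2] by (simp add: \<gamma>_def)
    then show ?thesis unfolding pi_eq by simp
  qed
  define p1 where "p1 x = (- \<gamma> + 0 * (x - b)) * F (\<gamma> * (x - b)) + (0 + 0 * (x - b)) * G (\<gamma> * (x - b))" for x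
  define q1 where "q1 x = (0 + 0 * (x - b)) * F (\<gamma> * (x - b)) + (v * \<gamma> * \<gamma> + 0 * (x - b)) * G (\<gamma> * (x - b))" for x
  define p2 where "p2 x = (0 + D * (x - b)) * F (\<gamma> * (x - b)) + (0 + 0 * (x - b)) * G (\<gamma> * (x - b))" for x
  define q2 where "q2 x = (- (\<gamma> + v * D) + 0 * (x - b)) * F (\<gamma> * (x - b)) + (0 + (- (v * \<gamma> * D)) * (x - b)) * G (\<gamma> * (x - b))" for x
  have T1: "tau1 s b v = (p1, q1)"
    unfolding tau1_def prod_eq_iff fun_eq_iff
    by (simp add: dpsi dpi p1_def q1_def \<gamma>_def algebra_simps)
  have T2: "tau2 s b v = (p2, q2)"
    unfolding tau2_def prod_eq_iff fun_eq_iff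
    by (simp add: DERIV_imp_deriv[OF dpsiw] DERIV_imp_deriv[OF dpiw] p2_def q2_def algebra_simps)
  define c where "c = \<kappa> * \<gamma> / 2"
  have cp: "c > 0" using kp gp by (simp add: c_def)
  have gen: "\<exists>C. \<forall>x. ((\<alpha> + \<beta> * (x - b)) * F (\<gamma> * (x - b)) + (\<alpha>' + \<beta>' * (x - b)) * G (\<gamma> * (x - b)))\<^sup>2
            \<le> C * exp (- c * \<bar>x - b\<bar>)" for \<alpha> \<beta> \<alpha>' \<beta>'
    using comp_bound[OF bF bG kp gp] unfolding c_def by blast
  obtain C1 where C1: "\<And>x. (p1 x)\<^sup>2 \<le> C1 * exp (- c * \<bar>x - b\<bar>)" unfolding p1_def using gen by blast
  obtain C2 where C2: "\<And>x. (q1 x)\<^sup>2 \<le> C2 * exp (- c * \<bar>x - b\<bar>)" unfolding q1_def using gen by blast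
  obtain C3 where C3: "\<And>x. (p2 x)\<^sup>2 \<le> C3 * exp (- c * \<bar>x - b\<bar>)" unfolding p2_def using gen by blast
  obtain C4 where C4: "\<And>x. (q2 x)\<^sup>2 \<le> C4 * exp (- c * \<bar>x - b\<bar>)" unfolding q2_def using gen by blast
  have cFc: "continuous_on UNIV (\<lambda>x. F (\<gamma> * (x - b)))"
    by (rule continuous_on_compose2[OF cF]) (auto intro!: continuous_intros)
  have cGc: "continuous_on UNIV (\<lambda>x. G (\<gamma> * (x - b)))"
    by (rule continuous_on_compose2[OF cG]) (auto intro!: continuous_intros)
  have cgen: "continuous_on UNIV (\<lambda>x. (\<alpha> + \<beta> * (x - b)) * F (\<gamma> * (x - b)) + (\<alpha>' + \<beta>' * (x - b)) * G (\<gamma> * (x - b)))" for \<alpha> \<beta> \<alpha>' \<beta>'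
    by (intro continuous_intros cFc cGc)
  have cp1: "continuous_on UNIV p1" unfolding p1_def by (rule cgen)
  have cq1: "continuous_on UNIV q1" unfolding q1_def by (rule cgen)
  have cp2: "continuous_on UNIV p2" unfolding p2_def by (rule cgen)
  have cq2: "continuous_on UNIV q2" unfolding q2_def by (rule cgen)
  note PI = prod_integrable2[OF cp]
  have i11: "integrable lborel (\<lambda>x. p1 x * q1 x)" by (rule PI[OF cp1 cq1 C1 C2])
  have i21: "integrable lborel (\<lambda>x. p2 x * q1 x)" by (rule PI[OF cp2 cq1 C3 C2])
  have j11: "integrable lborel (\<lambda>x. q1 x * p1 x)" by (rule PI[OF cq1 cp1 C2 C1])
  have j21: "integrable lborel (\<lambda>x. q2 x * p1 x)" by (rule PI[OF cq2 cp1 C4 C1])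
  have i12: "integrable lborel (\<lambda>x. p1 x * q2 x)" by (rule PI[OF cp1 cq2 C1 C4])
  have i22: "integrable lborel (\<lambda>x. p2 x * q2 x)" by (rule PI[OF cp2 cq2 C3 C4])
  have j12: "integrable lborel (\<lambda>x. q1 x * p2 x)" by (rule PI[OF cq1 cp2 C2 C3])
  have j22: "integrable lborel (\<lambda>x. q2 x * p2 x)" by (rule PI[OF cq2 cp2 C4 C3])
  define K where "K = Omega (p1, q1) (p2, q2)"
  define h where "h x = \<gamma> * (\<gamma> + v * D) * (F (\<gamma> * (x - b)))\<^sup>2" for x
  have hK: "K = integral\<^sup>L lborel h"
  proof -
    have "K = (\<integral>x. p1 x * q2 x - q1 x * p2 x \<partial>lborel)"
      unfolding K_def Omega_def using i12 j12 by simp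
    also have "(\<lambda>x. p1 x * q2 x - q1 x * p2 x) = h"
      by (rule ext) (simp add: p1_def q1_def p2_def q2_def h_def power2_eq_square algebra_simps)
    finally show ?thesis .
  qed
  have ih: "integrable lborel h"
  proof -
    have "(\<lambda>x. p1 x * q2 x - q1 x * p2 x) = h"
      by (rule ext) (simp add: p1_def q1_def p2_def q2_def h_def power2_eq_square algebra_simps)
    with Bochner_Integration.integrable_diff[OF i12 j12] show ?thesis by simp
  qed
  obtain t0 where t0: "F t0 \<noteq> 0"
  proof (rule ccontr)
    assume "\<not> thesis"
    then have F0: "\<And>t. F t = 0" using that by blast
    have "s t = s 0" for t by (rule DERIV_isconst_all) (use dF F0 in metis)
    then have "s = (\<lambda>_. s 0)" by auto
    moreover have "(s \<longlongrightarrow> a) at_top" "(s \<longlongrightarrow> -a) at_bot" using assms(3) unfolding is_kink_def by auto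
    ultimately have "((\<lambda>_::real. s 0) \<longlongrightarrow> a) at_top" "((\<lambda>_::real. s 0) \<longlongrightarrow> -a) at_bot" by simp_all
    then have "s 0 = a" "s 0 = -a"
      using tendsto_unique[OF trivial_limit_at_top_linorder tendsto_const]
            tendsto_unique[OF trivial_limit_at_bot_linorder tendsto_const] by blast+
    then show False using assms(1) by simp
  qed
  have gD: "\<gamma> + v * D > 0" using gp vD by simp
  have Kp: "K > 0"
  proof -
    have "integral\<^sup>L lborel h > 0"
    proof (rule pos_integral[OF _ _ ih, of "b + t0 / \<gamma>"])
      show "continuous_on UNIV h" unfolding h_def by (intro continuous_intros cFc)
      show "h x \<ge> 0" for x unfolding h_def using gp gD by simp
      show "h (b + t0 / \<gamma>) > 0" unfolding h_def using gp gD t0 by simp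
    qed
    then show ?thesis using hK by simp
  qed
  have L1: "lin_comb 1 (p1, q1) 0 (p2, q2) = (p1, q1)" by (simp add: lin_comb_def)
  have L2: "lin_comb 0 (p1, q1) 1 (p2, q2) = (p2, q2)" by (simp add: lin_comb_def)
  show ?thesis
    unfolding symplectic_subspace_def span2_def T1 T2
  proof (intro ballI impI)
    fix Y assume "Y \<in> {lin_comb c1 (p1, q1) c2 (p2, q2) |c1 c2. True}"
    then obtain c1 c2 where Y: "Y = lin_comb c1 (p1, q1) c2 (p2, q2)" by blast
    assume H: "\<forall>Z\<in>{lin_comb c1 (p1, q1) c2 (p2, q2) |c1 c2. True}. Omega Y Z = 0"
    have m1: "(p1, q1) \<in> {lin_comb c1 (p1, q1) c2 (p2, q2) |c1 c2. True}"
      by (rule CollectI, rule exI[of _ 1], rule exI[of _ 0]) (simp add: L1)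
    have "Omega Y (p1, q1) = 0" using H m1 by blast
    moreover have "Omega Y (p1, q1) = c1 * Omega (p1, q1) (p1, q1) + c2 * Omega (p2, q2) (p1, q1)"
      unfolding Y by (rule Omega_lin) (use i11 i21 j11 j21 in simp_all)
    ultimately have "c2 * K = 0" unfolding K_def using Omega_self Omega_anti[of "(p2, q2)" "(p1, q1)"] by simp
    then have c2: "c2 = 0" using Kp by simp
    have m2: "(p2, q2) \<in> {lin_comb c1 (p1, q1) c2 (p2, q2) |c1 c2. True}"
      by (rule CollectI, rule exI[of _ 0], rule exI[of _ 1]) (simp add: L2)
    have "Omega Y (p2, q2) = 0" using H m2 by blast
    moreover have "Omega Y (p2, q2) = c1 * Omega (p1, q1) (p2, q2) + c2 * Omega (p2, q2) (p2, q2)"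
      unfolding Y by (rule Omega_lin) (use i12 i22 j12 j22 in simp_all)
    ultimately have "c1 * K = 0" unfolding K_def using Omega_self by simp
    then have c1: "c1 = 0" using Kp by simp
    show "Y = ((\<lambda>_. 0), (\<lambda>_. 0))" unfolding Y c1 c2 by (simp add: lin_comb_def)
  qed
qed

end
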